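(* Let $W$ and $V$ be B-DMCs which are symmetric, symmetrized under the same permutation, and suppose that for a given $N=2^n$ ($n\ge0$) and $i\in\{1,\dots,N\}$: (A) $\mathbb P_V[L_{V_N^{(i)}}(y_1^N)<1]\ge\mathbb P_V[L_{V_N^{(i)}}(y_1^N)>1]$, (B) $Pe_N^{(i)}(W,V)-Pe_N^{(i)}(V)\le0$. Then (A) and (B) hold with $(N,i)$ replaced by $(2N,2i-1)$, and (A) holds with $(N,i)$ replaced by $(2N,2i)$. However, (B) need not hold for $(2N,2i)$: e.g. for $\mathcal Y=\{0,e,1\}$, $W$ the binary symmetric channel with crossover probability $0.3$ (with $W(e|x)=0$) and $V$ given by $V(0|0)=0.4, V(e|0)=0.5, V(1|0)=0.1$, $V(y|1)=V(\pi(y)|0)$ with $\pi$ swapping $0,1$ and fixing $e$ (so $L_V$ takes values $1/4,1,4$), conditions (A) and (B) hold for $N=1,i=1$ but (B) fails for $N=2,i=2$.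
   Context: A B-DMC $W:\{0,1\}\to\mathcal Y$ is given by transition probabilities $W(y|x)$, $\mathcal Y$ finite; $L_W(y)=W(y|1)/W(y|0)$. $W,V$ are "symmetric, symmetrized under the same permutation" if there is an involutive permutation $\pi$ of $\mathcal Y$ with $W(y|1)=W(\pi(y)|0)$, $V(y|1)=V(\pi(y)|0)$ for all $y$. For a B-DMC $W$: $W^-(y_1y_2|u_1)=\sum_{u_2}\tfrac12W(y_1|u_1\oplus u_2)W(y_2|u_2)$, $W^+(y_1y_2u_1|u_2)=\tfrac12W(y_1|u_1\oplus u_2)W(y_2|u_2)$. Synthetic channels: $W_1^{(1)}=W$, $W_{2N}^{(2i-1)}=(W_N^{(i)})^-$, $W_{2N}^{(2i)}=(W_N^{(i)})^+$; an output of $W_N^{(i)}$ is written $(y_1^N,u_1^{i-1})$ as in Arıkan's construction and $L_{V_N^{(i)}}(y_1^N):=L_{V_N^{(i)}}(y_1^N,0_1^{i-1})$. With $L_1=L_{V_N^{(i)}}(y_1^N)$, $L_2=L_{V_N^{(i)}}(y_{N+1}^{2N})$: $L_{V_{2N}^{(2i-1)}}=\frac{L_1+L_2}{1+L_1L_2}$, $L_{V_{2N}^{(2i)}}=L_1L_2$. Notation: $W(y_1^N|0_1^N)=\prod_jW(y_j|0)$, $\mathbb P_W[E]=\sum_{y_1^N}W(y_1^N|0_1^N)\mathbf 1\{E\}$, $\mathbf H(\ell)=\mathbf 1\{\ell>1\}+\tfrac12\mathbf 1\{\ell=1\}$. Mismatched error probability: $Pe_N^{(i)}(W,V)=\sum_{u}\tfrac12\sum_{(y_1^N,u_1^{i-1})}W_N^{(i)}(y_1^N,u_1^{i-1}|u)\big[\mathbf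 1\{V_N^{(i)}(\cdot|u\oplus1)>V_N^{(i)}(\cdot|u)\}+\tfrac12\mathbf 1\{V_N^{(i)}(\cdot|u\oplus1)=V_N^{(i)}(\cdot|u)\}\big]$, evaluated at the output $(y_1^N,u_1^{i-1})$; $Pe_N^{(i)}(V)=Pe_N^{(i)}(V,V)$. For such symmetric $W,V$ it is known that $Pe_N^{(i)}(W,V)=\sum_{y_1^N}W(y_1^N|0_1^N)\mathbf H(L_{V_N^{(i)}}(y_1^N))$. *)

theory Defs
  imports Complex_Main
begin

text \<open>Binary-input channels.  Inputs are bits (False = 0, True = 1);
  a channel W is given by its transition probabilities W y x = W(y|x).\<close>

type_synonym 'y channel = "'y \<Rightarrow> bool \<Rightarrow> real"

definition bdmc :: "('y::finite) channel \<Rightarrow> bool" where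
  "bdmc W \<longleftrightarrow> (\<forall>y x. 0 \<le> W y x) \<and> (\<forall>x. (\<Sum>y\<in>UNIV. W y x) = 1)"

definition sym_same_perm :: "('y::finite) channel \<Rightarrow> 'y channel \<Rightarrow> bool" where
  "sym_same_perm W V \<longleftrightarrow> (\<exists>\<pi>. bij \<pi> \<and> (\<forall>y. \<pi> (\<pi> y) = y) \<and>
      (\<forall>y. W y True = W (\<pi> y) False) \<and> (\<forall>y. V y True = V (\<pi> y) False))"

text \<open>An output of W_N^(i) is a pair (y_1^N, u_1^(i-1)),
  represented as a pair of lists (ys, us).  The recursion follows Arikan's
  construction: for the doubled channel, the first half of the outputs and the
  bits u_odd XOR u_even feed the first copy, the second half of the outputs and
  u_even feed the second copy.\<close>

type_synonym 'y syn_channel = "'y list \<times> bool list \<Rightarrow> bool \<Rightarrow> real"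

definition odd_part :: "bool list \<Rightarrow> bool list" where
  "odd_part us = map (\<lambda>k. us ! (2*k)) [0..<length us div 2]"

definition even_part :: "bool list \<Rightarrow> bool list" where
  "even_part us = map (\<lambda>k. us ! (2*k+1)) [0..<length us div 2]"

definition xor_list :: "bool list \<Rightarrow> bool list \<Rightarrow> bool list" where
  "xor_list as bs = map2 (\<noteq>) as bs"

text \<open>Minus transform; N is the block length of the channel Q being transformed.
  Output (y_1^(2N), u_1^(2i-2)), input u_(2i-1).\<close>
definition chan_minus :: "nat \<Rightarrow> 'y syn_channel \<Rightarrow> 'y syn_channel" where
  "chan_minus N Q = (\<lambda>(ys, us) u1.
     (\<Sum>u2\<in>UNIV. 1/2 * Q (take N ys, xor_list (odd_part us) (even_part us)) (u1 \<noteq> u2)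
                       * Q (drop N ys, even_part us) u2))"

text \<open>Plus transform. Output (y_1^(2N), u_1^(2i-1)), input u_(2i).\<close>
definition chan_plus :: "nat \<Rightarrow> 'y syn_channel \<Rightarrow> 'y syn_channel" where
  "chan_plus N Q = (\<lambda>(ys, us) u2.
     (let us' = butlast us; u1 = last us in
      1/2 * Q (take N ys, xor_list (odd_part us') (even_part us')) (u1 \<noteq> u2)
          * Q (drop N ys, even_part us') u2))"

text \<open>synth W n i = W_N^(i) with N = 2^n, for 1 \<le> i \<le> N.\<close>
fun synth :: "'y channel \<Rightarrow> nat \<Rightarrow> nat \<Rightarrow> 'y syn_channel" where
  "synth W 0 i = (\<lambda>(ys, us) x. W (hd ys) x)"
| "synth W (Suc n) i =
     (if odd i then chan_minus (2^n) (synth W n ((i+1) div 2))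
      else chan_plus (2^n) (synth W n (i div 2)))"

definition syn_outputs :: "nat \<Rightarrow> nat \<Rightarrow> ('y list \<times> bool list) set" where
  "syn_outputs n i = {(ys, us). length ys = 2^n \<and> length us = i - 1}"

definition Pe_mis :: "('y::finite) channel \<Rightarrow> 'y channel \<Rightarrow> nat \<Rightarrow> nat \<Rightarrow> real" where
  "Pe_mis W V n i = (\<Sum>u\<in>UNIV. 1/2 * (\<Sum>out\<in>syn_outputs n i.
      synth W n i out u *
        ((if synth V n i out (\<not> u) > synth V n i out u then 1 else 0)
         + 1/2 * (if synth V n i out (\<not> u) = synth V n i out u then 1 else 0))))"

definition Pe :: "('y::finite) channel \<Rightarrow> nat \<Rightarrow> nat \<Rightarrow> real" where
  "Pe V n i = Pe_mis V V n i"

text \<open>L_(V_N^(i))(y_1^N) := L_(V_N^(i))(y_1^N, 0_1^(i-1)).\<close>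
definition LR :: "'y channel \<Rightarrow> nat \<Rightarrow> nat \<Rightarrow> 'y list \<Rightarrow> real" where
  "LR V n i ys = synth V n i (ys, replicate (i - 1) False) True
               / synth V n i (ys, replicate (i - 1) False) False"

text \<open>P_W[E] for an event E on y_1^N, N = 2^n, under the all-zero input.\<close>
definition prob_zero :: "('y::finite) channel \<Rightarrow> nat \<Rightarrow> ('y list \<Rightarrow> bool) \<Rightarrow> real" where
  "prob_zero W n E = (\<Sum>ys\<in>{ys. length ys = 2^n}.
      (\<Prod>j<length ys. W (ys ! j) False) * (if E ys then 1 else 0))"

definition condA :: "('y::finite) channel \<Rightarrow> nat \<Rightarrow> nat \<Rightarrow> bool" where
  "condA V n i \<longleftrightarrow> prob_zero V n (\<lambda>ys. LR V n i ys < 1) \<ge> prob_zero V n (\<lambda>ys. LR V n i ys > 1)"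

definition condB :: "('y::finite) channel \<Rightarrow> 'y channel \<Rightarrow> nat \<Rightarrow> nat \<Rightarrow> bool" where
  "condB W V n i \<longleftrightarrow> Pe_mis W V n i - Pe V n i \<le> 0"

datatype Y3 = Y0 | Ye | Y1

lemma UNIV_Y3: "(UNIV :: Y3 set) = {Y0, Ye, Y1}"
  using Y3.exhaust by auto

instance Y3 :: finite
  by standard (simp add: UNIV_Y3)

definition swap01 :: "Y3 \<Rightarrow> Y3" where
  "swap01 y = (case y of Y0 \<Rightarrow> Y1 | Ye \<Rightarrow> Ye | Y1 \<Rightarrow> Y0)"

definition W_ex :: "Y3 channel" where
  "W_ex y x = (let p = (case y of Y0 \<Rightarrow> 7/10 | Ye \<Rightarrow> 0 | Y1 \<Rightarrow> 3/10)
               in if x then (case swap01 y of Y0 \<Rightarrow> 7/10 | Ye \<Rightarrow> 0 | Y1 \<Rightarrow> 3/10) else p)"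

definition V_ex :: "Y3 channel" where
  "V_ex y x = (if x then (case swap01 y of Y0 \<Rightarrow> 4/10 | Ye \<Rightarrow> 5/10 | Y1 \<Rightarrow> 1/10)
               else (case y of Y0 \<Rightarrow> 4/10 | Ye \<Rightarrow> 5/10 | Y1 \<Rightarrow> 1/10))"

end

theory Submission
  imports Defs
begin
lemma odd_part_Nil[simp]: "odd_part [] = []" by (simp add: odd_part_def)
lemma odd_part_single[simp]: "odd_part [a] = []" by (simp add: odd_part_def)
lemma odd_part_Cons2[simp]: "odd_part (a#b#r) = a # odd_part r"
  by (simp add: odd_part_def upt_conv_Cons map_Suc_upt[symmetric] del: upt_Suc)
lemma even_part_Nil[simp]: "even_part [] = []" by (simp add: even_part_def)
lemma even_part_single[simp]: "even_part [a] = []" by (simp add: even_part_def)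
lemma even_part_Cons2[simp]: "even_part (a#b#r) = b # even_part r"
  by (simp add: even_part_def upt_conv_Cons map_Suc_upt[symmetric] del: upt_Suc)
lemma length_odd_part[simp]: "length (odd_part us) = length us div 2" by (simp add: odd_part_def)
lemma length_even_part[simp]: "length (even_part us) = length us div 2" by (simp add: even_part_def)
lemma xor_Nil[simp]: "xor_list [] bs = []" "xor_list as [] = []" by (auto simp: xor_list_def)
lemma xor_Cons[simp]: "xor_list (a#as) (b#bs) = (a\<noteq>b) # xor_list as bs" by (simp add: xor_list_def)
lemma length_xor[simp]: "length (xor_list as bs) = min (length as) (length bs)" by (simp add: xor_list_def)

fun il :: "bool list \<Rightarrow> bool list \<Rightarrow> bool list" where
  "il (a#as) (c#cs) = a # c # il as cs"
| "il _ _ = []"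

lemma xor_xor: "length a = length c \<Longrightarrow> xor_list (xor_list a c) c = a"
  by (induct a c rule: list_induct2) auto
lemma length_il: "length a = length c \<Longrightarrow> length (il a c) = 2 * length a"
  by (induct a c rule: list_induct2) auto
lemma odd_il: "length a = length c \<Longrightarrow> odd_part (il a c) = a"
  by (induct a c rule: list_induct2) auto
lemma even_il: "length a = length c \<Longrightarrow> even_part (il a c) = c"
  by (induct a c rule: list_induct2) auto
lemma il_parts: "even (length us) \<Longrightarrow> il (odd_part us) (even_part us) = us"
  by (induct us rule: induct_list012) auto
lemma odd_rep: "odd_part (replicate (2*m) b) = replicate m b"
  by (induct m) (auto simp: numeral_2_eq_2)
lemma even_rep: "even_part (replicate (2*m) b) = replicate m b"
  by (induct m) (auto simp: numeral_2_eq_2)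
lemma xor_rep: "xor_list (replicate m False) (replicate m False) = replicate m False"
  by (induct m) auto


lemma prod_nth_list: "(\<Prod>j<length xs. f (xs!j)) = prod_list (map f xs)"
  by (induct xs) (simp_all del: prod.lessThan_Suc add: prod.lessThan_Suc_shift)

lemma prod_append: "(\<Prod>j<length (xs@ys). f ((xs@ys)!j)) = (\<Prod>j<length xs. f (xs!j)) * (\<Prod>j<length ys. f (ys!j))"
  by (simp only: prod_nth_list) simp

lemma finL: "finite {ys::('y::finite) list. length ys = k}"
  using finite_lists_length_eq[of "UNIV::'y set" k] by simp

lemma sum_L0: "(\<Sum>ys\<in>{ys::('y::finite) list. length ys = 2^0}. F ys) = (\<Sum>y\<in>UNIV. F [y])"
proof -
  have "{ys::'y list. length ys = 2^0} = (\<lambda>y. [y]) ` UNIV"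
    by (auto simp: length_Suc_conv)
  moreover have "inj (\<lambda>y::'y. [y])" by (auto simp: inj_def)
  ultimately show ?thesis by (simp add: sum.reindex)
qed

lemma sum_LSuc: "(\<Sum>ys\<in>{ys::('y::finite) list. length ys = 2^Suc n}. F ys)
   = (\<Sum>y1\<in>{ys. length ys = 2^n}. \<Sum>y2\<in>{ys. length ys = 2^n}. F (y1@y2))"
proof -
  let ?L = "{ys::'y list. length ys = 2^n}"
  have e: "{ys::'y list. length ys = 2^Suc n} = (\<lambda>(a,b). a@b) ` (?L \<times> ?L)"
  proof (rule set_eqI, rule iffI)
    fix ys :: "'y list" assume "ys \<in> {ys. length ys = 2^Suc n}"
    then have l: "length ys = 2*2^n" by simp
    show "ys \<in> (\<lambda>(a,b). a@b) ` (?L \<times> ?L)"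
      by (rule image_eqI[where x="(take (2^n) ys, drop (2^n) ys)"]) (use l in auto)
  qed auto
  have i: "inj_on (\<lambda>(a,b). a@b) (?L \<times> ?L)"
    unfolding inj_on_def by (clarsimp simp: append_eq_append_conv)
  have "sum F ((\<lambda>(a,b). a@b) ` (?L \<times> ?L)) = (\<Sum>x\<in>?L \<times> ?L. F (case x of (a,b) \<Rightarrow> a@b))"
    by (rule sum.reindex[OF i, unfolded comp_def])
  moreover have "(\<Sum>x\<in>?L \<times> ?L. F (case x of (a,b) \<Rightarrow> a@b)) = (\<Sum>x\<in>?L \<times> ?L. case x of (y1,y2) \<Rightarrow> F (y1@y2))"
    by (rule sum.cong) (auto split: prod.splits)
  ultimately show ?thesis unfolding e by (simp only: sum.cartesian_product)
qed


lemma synth_nonneg: "bdmc W \<Longrightarrow> 0 \<le> synth W n i ot x"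
proof (induction n arbitrary: i ot x)
  case 0 then show ?case by (cases ot) (auto simp: bdmc_def)
next
  case (Suc n)
  obtain ys us where ot: "ot = (ys,us)" by (cases ot)
  show ?case
  proof (cases "odd i")
    case True then show ?thesis unfolding ot
      by (simp add: chan_minus_def) (intro sum_nonneg mult_nonneg_nonneg; simp add: Suc.IH[OF Suc.prems])
  next
    case False then show ?thesis unfolding ot
      by (simp add: chan_plus_def Let_def) (intro mult_nonneg_nonneg; simp add: Suc.IH[OF Suc.prems])
  qed
qed

lemma synth_minus0:
  assumes "1 \<le> i" "length y1 = 2^n"
  shows "synth V (Suc n) (2*i-1) (y1@y2, replicate (2*i-1-1) False) u
     = (\<Sum>u2\<in>UNIV. 1/2 * synth V n i (y1, replicate (i-1) False) (u \<noteq> u2) * synth V n i (y2, replicate (i-1) False) u2)"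
proof -
  have a: "odd (2*i-1)" "(2*i-1+1) div 2 = i" "2*i-1-1 = 2*(i-1)" using assms by auto
  show ?thesis using assms
    by (simp only: synth.simps a if_True) (simp add: chan_minus_def odd_rep even_rep xor_rep)
qed

lemma synth_plus0:
  assumes "1 \<le> i" "length y1 = 2^n"
  shows "synth V (Suc n) (2*i) (y1@y2, replicate (2*i-1) False) u
     = 1/2 * synth V n i (y1, replicate (i-1) False) u * synth V n i (y2, replicate (i-1) False) u"
proof -
  have e: "2*i-1 = Suc (2*(i-1))" using assms by simp
  have a: "\<not> odd (2*i)" "(2*i) div 2 = i" "replicate (2*i-1) False = replicate (2*(i-1)) False @ [False]"
    by (simp, simp, simp only: e replicate_append_same replicate_Suc)
  show ?thesis using assms
    by (simp only: synth.simps a if_False) (simp add: chan_plus_def odd_rep even_rep xor_rep Let_def)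
qed


section \<open>Abstract invariant\<close>

lemma swap1:
  fixes A B :: "'x \<Rightarrow> real" and G :: "real \<Rightarrow> real \<Rightarrow> 'z \<Rightarrow> real"
  assumes sym: "\<And>g. (\<Sum>y\<in>Y. A y * g (A y) (B y)) = (\<Sum>y\<in>Y. B y * g (B y) (A y))"
  shows "(\<Sum>y1\<in>Y. \<Sum>y2\<in>Z. A y1 * G (A y1) (B y1) y2) = (\<Sum>y1\<in>Y. \<Sum>y2\<in>Z. B y1 * G (B y1) (A y1) y2)"
  using sym[of "\<lambda>a b. \<Sum>y2\<in>Z. G a b y2"] by (simp add: sum_distrib_left)

lemma swap2:
  fixes A B :: "'x \<Rightarrow> real" and G :: "'z \<Rightarrow> real \<Rightarrow> real \<Rightarrow> real"
  assumes sym: "\<And>g. (\<Sum>y\<in>Y. A y * g (A y) (B y)) = (\<Sum>y\<in>Y. B y * g (B y) (A y))"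
  shows "(\<Sum>y1\<in>Z. \<Sum>y2\<in>Y. A y2 * G y1 (A y2) (B y2)) = (\<Sum>y1\<in>Z. \<Sum>y2\<in>Y. B y2 * G y1 (B y2) (A y2))"
  by (rule sum.cong[OF refl]) (rule sym)

lemma meas1:
  fixes A B \<mu> :: "'x \<Rightarrow> real" and G :: "real \<Rightarrow> real \<Rightarrow> 'z \<Rightarrow> real"
  assumes meas: "\<And>g. (\<Sum>y\<in>Y. \<mu> y * g (A y) (B y)) = K * (\<Sum>y\<in>Y. B y * g (A y) (B y))"
  shows "(\<Sum>y1\<in>Y. \<Sum>y2\<in>Z. \<mu> y1 * G (A y1) (B y1) y2) = K * (\<Sum>y1\<in>Y. \<Sum>y2\<in>Z. B y1 * G (A y1) (B y1) y2)"
  using meas[of "\<lambda>a b. \<Sum>y2\<in>Z. G a b y2"] by (simp add: sum_distrib_left)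

lemma meas2:
  fixes A B \<mu> :: "'x \<Rightarrow> real" and G :: "'z \<Rightarrow> real \<Rightarrow> real \<Rightarrow> real"
  assumes meas: "\<And>g. (\<Sum>y\<in>Y. \<mu> y * g (A y) (B y)) = K * (\<Sum>y\<in>Y. B y * g (A y) (B y))"
  shows "(\<Sum>y1\<in>Z. \<Sum>y2\<in>Y. \<mu> y2 * G y1 (A y2) (B y2)) = K * (\<Sum>y1\<in>Z. \<Sum>y2\<in>Y. B y2 * G y1 (A y2) (B y2))"
  by (simp add: meas sum_distrib_left)

lemma dswap:
  fixes A B :: "'x \<Rightarrow> real" and G :: "real \<Rightarrow> real \<Rightarrow> real \<Rightarrow> real \<Rightarrow> real"
  assumes sym: "\<And>g. (\<Sum>y\<in>Y. A y * g (A y) (B y)) = (\<Sum>y\<in>Y. B y * g (B y) (A y))"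
  shows "(\<Sum>y1\<in>Y. \<Sum>y2\<in>Y. A y1 * A y2 * G (A y1) (B y1) (A y2) (B y2))
       = (\<Sum>y1\<in>Y. \<Sum>y2\<in>Y. B y1 * B y2 * G (B y1) (A y1) (B y2) (A y2))"
proof -
  have "(\<Sum>y1\<in>Y. \<Sum>y2\<in>Y. A y1 * A y2 * G (A y1) (B y1) (A y2) (B y2))
      = (\<Sum>y1\<in>Y. \<Sum>y2\<in>Y. A y1 * (A y2 * G (A y1) (B y1) (A y2) (B y2)))"
    by (simp add: mult.assoc)
  also have "\<dots> = (\<Sum>y1\<in>Y. \<Sum>y2\<in>Y. B y1 * (A y2 * G (B y1) (A y1) (A y2) (B y2)))"
    using swap1[OF sym, where Z=Y and G="\<lambda>a b y2. A y2 * G a b (A y2) (B y2)"] by simp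
  also have "\<dots> = (\<Sum>y1\<in>Y. \<Sum>y2\<in>Y. A y2 * (B y1 * G (B y1) (A y1) (A y2) (B y2)))"
    by (simp add: ac_simps)
  also have "\<dots> = (\<Sum>y1\<in>Y. \<Sum>y2\<in>Y. B y2 * (B y1 * G (B y1) (A y1) (B y2) (A y2)))"
    using swap2[OF sym, where Z=Y and G="\<lambda>y1 a b. B y1 * G (B y1) (A y1) a b"] by simp
  finally show ?thesis by (simp add: ac_simps)
qed

lemma minus_sym:
  fixes A B :: "'x \<Rightarrow> real" and g :: "real \<Rightarrow> real \<Rightarrow> real"
  assumes sym: "\<And>g. (\<Sum>y\<in>Y. A y * g (A y) (B y)) = (\<Sum>y\<in>Y. B y * g (B y) (A y))"
  shows "(\<Sum>y1\<in>Y. \<Sum>y2\<in>Y. (A y1 * B y2 + B y1 * A y2)/2 * g ((A y1 * B y2 + B y1 * A y2)/2) ((B y1 * B y2 + A y1 * A y2)/2))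
       = (\<Sum>y1\<in>Y. \<Sum>y2\<in>Y. (B y1 * B y2 + A y1 * A y2)/2 * g ((B y1 * B y2 + A y1 * A y2)/2) ((A y1 * B y2 + B y1 * A y2)/2))"
    (is "?L = ?R")
proof -
  define H where "H = (\<lambda>y1 y2. g ((B y1 * B y2 + A y1 * A y2)/2) ((A y1 * B y2 + B y1 * A y2)/2))"
  have L1: "(\<Sum>y1\<in>Y. \<Sum>y2\<in>Y. A y1 * (B y2 / 2 * g ((A y1 * B y2 + B y1 * A y2)/2) ((B y1 * B y2 + A y1 * A y2)/2)))
       = (\<Sum>y1\<in>Y. \<Sum>y2\<in>Y. B y1 * B y2 / 2 * H y1 y2)"
    using swap1[OF sym, where Z=Y and G="\<lambda>a b y2. B y2 / 2 * g ((a * B y2 + b * A y2)/2) ((b * B y2 + a * A y2)/2)"]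
    by (simp add: H_def ac_simps)
  have L2: "(\<Sum>y1\<in>Y. \<Sum>y2\<in>Y. A y2 * (B y1 / 2 * g ((A y1 * B y2 + B y1 * A y2)/2) ((B y1 * B y2 + A y1 * A y2)/2)))
       = (\<Sum>y1\<in>Y. \<Sum>y2\<in>Y. B y1 * B y2 / 2 * H y1 y2)"
    using swap2[OF sym, where Z=Y and G="\<lambda>y1 a b. B y1 / 2 * g ((A y1 * b + B y1 * a)/2) ((B y1 * b + A y1 * a)/2)"]
    by (simp add: H_def ac_simps)
  have R2: "(\<Sum>y1\<in>Y. \<Sum>y2\<in>Y. A y1 * A y2 * (1/2 * H y1 y2)) = (\<Sum>y1\<in>Y. \<Sum>y2\<in>Y. B y1 * B y2 * (1/2 * H y1 y2))"
    using dswap[OF sym, where G="\<lambda>a1 b1 a2 b2. 1/2 * g ((b1 * b2 + a1 * a2)/2) ((a1 * b2 + b1 * a2)/2)"]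
    by (simp add: H_def ac_simps)
  have "?L = (\<Sum>y1\<in>Y. \<Sum>y2\<in>Y. A y1 * (B y2 / 2 * g ((A y1 * B y2 + B y1 * A y2)/2) ((B y1 * B y2 + A y1 * A y2)/2)))
           + (\<Sum>y1\<in>Y. \<Sum>y2\<in>Y. A y2 * (B y1 / 2 * g ((A y1 * B y2 + B y1 * A y2)/2) ((B y1 * B y2 + A y1 * A y2)/2)))"
    by (simp add: sum.distrib[symmetric] algebra_simps add_divide_distrib)
  also have "\<dots> = (\<Sum>y1\<in>Y. \<Sum>y2\<in>Y. B y1 * B y2 * H y1 y2)"
    unfolding L1 L2 by (simp add: sum.distrib[symmetric] sum_divide_distrib[symmetric])
  also have "\<dots> = (\<Sum>y1\<in>Y. \<Sum>y2\<in>Y. B y1 * B y2 * (1/2 * H y1 y2)) + (\<Sum>y1\<in>Y. \<Sum>y2\<in>Y. A y1 * A y2 * (1/2 * H y1 y2))"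
    unfolding R2 by (simp add: sum.distrib[symmetric] algebra_simps)
  also have "\<dots> = ?R"
    by (simp add: H_def sum.distrib[symmetric] algebra_simps add_divide_distrib)
  finally show ?thesis .
qed


lemma minus_meas:
  fixes A B \<mu> :: "'x \<Rightarrow> real" and g :: "real \<Rightarrow> real \<Rightarrow> real"
  assumes sym: "\<And>g. (\<Sum>y\<in>Y. A y * g (A y) (B y)) = (\<Sum>y\<in>Y. B y * g (B y) (A y))"
  and meas: "\<And>g. (\<Sum>y\<in>Y. \<mu> y * g (A y) (B y)) = K * (\<Sum>y\<in>Y. B y * g (A y) (B y))"
  shows "(\<Sum>y1\<in>Y. \<Sum>y2\<in>Y. \<mu> y1 * \<mu> y2 * g ((A y1 * B y2 + B y1 * A y2)/2) ((B y1 * B y2 + A y1 * A y2)/2))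
       = (K*K) * (\<Sum>y1\<in>Y. \<Sum>y2\<in>Y. (B y1 * B y2 + A y1 * A y2)/2 * g ((A y1 * B y2 + B y1 * A y2)/2) ((B y1 * B y2 + A y1 * A y2)/2))"
    (is "?L = _ * ?R")
proof -
  define H where "H = (\<lambda>y1 y2. g ((A y1 * B y2 + B y1 * A y2)/2) ((B y1 * B y2 + A y1 * A y2)/2))"
  have "?L = (\<Sum>y1\<in>Y. \<Sum>y2\<in>Y. \<mu> y1 * (\<mu> y2 * g ((A y1 * B y2 + B y1 * A y2)/2) ((B y1 * B y2 + A y1 * A y2)/2)))"
    by (simp add: mult.assoc)
  also have "\<dots> = K * (\<Sum>y1\<in>Y. \<Sum>y2\<in>Y. B y1 * (\<mu> y2 * g ((A y1 * B y2 + B y1 * A y2)/2) ((B y1 * B y2 + A y1 * A y2)/2)))"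
    using meas[of "\<lambda>p q. \<Sum>y2\<in>Y. \<mu> y2 * g ((p * B y2 + q * A y2)/2) ((q * B y2 + p * A y2)/2)"] by (simp add: sum_distrib_left)
  also have "(\<Sum>y1\<in>Y. \<Sum>y2\<in>Y. B y1 * (\<mu> y2 * g ((A y1 * B y2 + B y1 * A y2)/2) ((B y1 * B y2 + A y1 * A y2)/2)))
     = (\<Sum>y1\<in>Y. \<Sum>y2\<in>Y. \<mu> y2 * (B y1 * g ((A y1 * B y2 + B y1 * A y2)/2) ((B y1 * B y2 + A y1 * A y2)/2)))"
    by (simp add: ac_simps)
  also have "\<dots> = K * (\<Sum>y1\<in>Y. \<Sum>y2\<in>Y. B y2 * (B y1 * g ((A y1 * B y2 + B y1 * A y2)/2) ((B y1 * B y2 + A y1 * A y2)/2)))"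
  proof -
    have aux: "(\<Sum>y2\<in>Y. \<mu> y2 * (B y1 * g ((A y1 * B y2 + B y1 * A y2)/2) ((B y1 * B y2 + A y1 * A y2)/2)))
       = K * (\<Sum>y2\<in>Y. B y2 * (B y1 * g ((A y1 * B y2 + B y1 * A y2)/2) ((B y1 * B y2 + A y1 * A y2)/2)))" for y1
      using meas[of "\<lambda>p q. B y1 * g ((A y1 * q + B y1 * p)/2) ((B y1 * q + A y1 * p)/2)"] by simp
    show ?thesis by (simp add: aux sum_distrib_left)
  qed
  finally have L: "?L = K * K * (\<Sum>y1\<in>Y. \<Sum>y2\<in>Y. B y1 * B y2 * H y1 y2)" by (simp add: H_def ac_simps)
  have D: "(\<Sum>y1\<in>Y. \<Sum>y2\<in>Y. A y1 * A y2 * H y1 y2) = (\<Sum>y1\<in>Y. \<Sum>y2\<in>Y. B y1 * B y2 * H y1 y2)"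
    using dswap[OF sym, where G="\<lambda>a1 b1 a2 b2. g ((a1 * b2 + b1 * a2)/2) ((b1 * b2 + a1 * a2)/2)"]
    by (simp add: H_def ac_simps)
  have "?R = (\<Sum>y1\<in>Y. \<Sum>y2\<in>Y. B y1 * B y2 * H y1 y2)/2 + (\<Sum>y1\<in>Y. \<Sum>y2\<in>Y. A y1 * A y2 * H y1 y2)/2"
    by (simp add: H_def sum.distrib[symmetric] sum_divide_distrib algebra_simps add_divide_distrib)
  then have "?R = (\<Sum>y1\<in>Y. \<Sum>y2\<in>Y. B y1 * B y2 * H y1 y2)" using D by simp
  with L show ?thesis by simp
qed

lemma plus_sym:
  fixes A B :: "'x \<Rightarrow> real" and g :: "real \<Rightarrow> real \<Rightarrow> real"
  assumes sym: "\<And>g. (\<Sum>y\<in>Y. A y * g (A y) (B y)) = (\<Sum>y\<in>Y. B y * g (B y) (A y))"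
  shows "(\<Sum>y1\<in>Y. \<Sum>y2\<in>Y. (A y1 * A y2)/2 * g ((A y1 * A y2)/2) ((B y1 * B y2)/2))
       = (\<Sum>y1\<in>Y. \<Sum>y2\<in>Y. (B y1 * B y2)/2 * g ((B y1 * B y2)/2) ((A y1 * A y2)/2))"
  using dswap[OF sym, where G="\<lambda>a1 b1 a2 b2. 1/2 * g ((a1 * a2)/2) ((b1 * b2)/2)"]
  by (simp add: ac_simps)

lemma plus_meas:
  fixes A B \<mu> :: "'x \<Rightarrow> real" and g :: "real \<Rightarrow> real \<Rightarrow> real"
  assumes meas: "\<And>g. (\<Sum>y\<in>Y. \<mu> y * g (A y) (B y)) = K * (\<Sum>y\<in>Y. B y * g (A y) (B y))"
  shows "(\<Sum>y1\<in>Y. \<Sum>y2\<in>Y. \<mu> y1 * \<mu> y2 * g ((A y1 * A y2)/2) ((B y1 * B y2)/2))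
       = (2*K*K) * (\<Sum>y1\<in>Y. \<Sum>y2\<in>Y. (B y1 * B y2)/2 * g ((A y1 * A y2)/2) ((B y1 * B y2)/2))"
proof -
  have "(\<Sum>y1\<in>Y. \<Sum>y2\<in>Y. \<mu> y1 * \<mu> y2 * g ((A y1 * A y2)/2) ((B y1 * B y2)/2))
      = (\<Sum>y1\<in>Y. \<Sum>y2\<in>Y. \<mu> y1 * (\<mu> y2 * g ((A y1 * A y2)/2) ((B y1 * B y2)/2)))"
    by (simp add: mult.assoc)
  also have "\<dots> = K * (\<Sum>y1\<in>Y. \<Sum>y2\<in>Y. B y1 * (\<mu> y2 * g ((A y1 * A y2)/2) ((B y1 * B y2)/2)))"
    using meas[of "\<lambda>p q. \<Sum>y2\<in>Y. \<mu> y2 * g ((p * A y2)/2) ((q * B y2)/2)"] by (simp add: sum_distrib_left)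
  also have "(\<Sum>y1\<in>Y. \<Sum>y2\<in>Y. B y1 * (\<mu> y2 * g ((A y1 * A y2)/2) ((B y1 * B y2)/2)))
      = (\<Sum>y1\<in>Y. \<Sum>y2\<in>Y. \<mu> y2 * (B y1 * g ((A y1 * A y2)/2) ((B y1 * B y2)/2)))"
    by (simp add: ac_simps)
  also have "\<dots> = K * (\<Sum>y1\<in>Y. \<Sum>y2\<in>Y. B y2 * (B y1 * g ((A y1 * A y2)/2) ((B y1 * B y2)/2)))"
  proof -
    have aux: "(\<Sum>y2\<in>Y. \<mu> y2 * (B y1 * g ((A y1 * A y2)/2) ((B y1 * B y2)/2)))
       = K * (\<Sum>y2\<in>Y. B y2 * (B y1 * g ((A y1 * A y2)/2) ((B y1 * B y2)/2)))" for y1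
      using meas[of "\<lambda>p q. B y1 * g ((A y1 * p)/2) ((B y1 * q)/2)"] by simp
    show ?thesis by (simp add: aux sum_distrib_left)
  qed
  finally show ?thesis by (simp add: sum_distrib_left ac_simps)
qed


definition Aof :: "'y channel \<Rightarrow> nat \<Rightarrow> nat \<Rightarrow> 'y list \<Rightarrow> real" where
  "Aof V n i ys = synth V n i (ys, replicate (i-1) False) True"
definition Bof :: "'y channel \<Rightarrow> nat \<Rightarrow> nat \<Rightarrow> 'y list \<Rightarrow> real" where
  "Bof V n i ys = synth V n i (ys, replicate (i-1) False) False"
definition muof :: "'y channel \<Rightarrow> 'y list \<Rightarrow> real" where
  "muof V ys = (\<Prod>j<length ys. V (ys!j) False)"

lemma muof_append: "muof V (y1@y2) = muof V y1 * muof V y2"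
  unfolding muof_def by (rule prod_append)

lemma AB_minus:
  assumes "1 \<le> j" "length y1 = 2^n"
  shows "Aof V (Suc n) (2*j-1) (y1@y2) = (Aof V n j y1 * Bof V n j y2 + Bof V n j y1 * Aof V n j y2)/2"
    and "Bof V (Suc n) (2*j-1) (y1@y2) = (Bof V n j y1 * Bof V n j y2 + Aof V n j y1 * Aof V n j y2)/2"
  unfolding Aof_def Bof_def using synth_minus0[OF assms, of V y2 True] synth_minus0[OF assms, of V y2 False]
  by (simp_all add: UNIV_bool algebra_simps)

lemma AB_plus:
  assumes "1 \<le> j" "length y1 = 2^n"
  shows "Aof V (Suc n) (2*j) (y1@y2) = (Aof V n j y1 * Aof V n j y2)/2"
    and "Bof V (Suc n) (2*j) (y1@y2) = (Bof V n j y1 * Bof V n j y2)/2"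
  unfolding Aof_def Bof_def using synth_plus0[OF assms, of V y2 True] synth_plus0[OF assms, of V y2 False]
  by simp_all

definition Inv :: "('y::finite) channel \<Rightarrow> nat \<Rightarrow> nat \<Rightarrow> bool" where
  "Inv V n i \<longleftrightarrow>
    (\<forall>g. (\<Sum>ys\<in>{ys. length ys = 2^n}. Aof V n i ys * g (Aof V n i ys) (Bof V n i ys))
       = (\<Sum>ys\<in>{ys. length ys = 2^n}. Bof V n i ys * g (Bof V n i ys) (Aof V n i ys)))
  \<and> (\<exists>K\<ge>0. \<forall>g. (\<Sum>ys\<in>{ys. length ys = 2^n}. muof V ys * g (Aof V n i ys) (Bof V n i ys))
       = K * (\<Sum>ys\<in>{ys. length ys = 2^n}. Bof V n i ys * g (Aof V n i ys) (Bof V n i ys)))"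

lemma Inv_base:
  fixes V :: "('y::finite) channel"
  assumes "bij \<pi>" "\<forall>y. \<pi> (\<pi> y) = y" "\<forall>y. V y True = V (\<pi> y) False"
  shows "Inv V 0 i"
proof -
  have A0: "Aof V 0 i [y] = V y True" "Bof V 0 i [y] = V y False" "muof V [y] = V y False" for y
    by (simp_all add: Aof_def Bof_def muof_def)
  have VT: "V (\<pi> y) True = V y False" for y using assms by metis
  have inj: "inj \<pi>" and surj: "\<pi> ` UNIV = UNIV" using assms(1) by (auto simp: bij_def)
  have "(\<Sum>y\<in>UNIV. V y True * g (V y True) (V y False)) = (\<Sum>y\<in>UNIV. V y False * g (V y False) (V y True))" for g :: "real \<Rightarrow> real \<Rightarrow> real"
  proof -
    have "(\<Sum>y\<in>UNIV. V y True * g (V y True) (V y False)) = (\<Sum>y\<in>UNIV. (\<lambda>z. V z False * g (V z False) (V z True)) (\<pi> y))"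
      using assms(3) VT by simp
    also have "\<dots> = (\<Sum>z\<in>\<pi> ` UNIV. V z False * g (V z False) (V z True))"
      by (simp add: sum.reindex[OF inj])
    finally show ?thesis using surj by simp
  qed
  then show ?thesis unfolding Inv_def sum_L0 A0
    by (auto intro!: exI[of _ 1])
qed

lemma Inv_step:
  fixes V :: "('y::finite) channel"
  assumes "Inv V n j" "1 \<le> j"
  shows "Inv V (Suc n) (2*j-1)" "Inv V (Suc n) (2*j)"
proof -
  let ?L = "{ys::'y list. length ys = 2^n}"
  let ?A = "Aof V n j" and ?B = "Bof V n j"
  from assms(1) obtain K where K: "K \<ge> 0"
    and meas: "\<And>g. (\<Sum>ys\<in>?L. muof V ys * g (?A ys) (?B ys)) = K * (\<Sum>ys\<in>?L. ?B ys * g (?A ys) (?B ys))"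
    and sym: "\<And>g. (\<Sum>ys\<in>?L. ?A ys * g (?A ys) (?B ys)) = (\<Sum>ys\<in>?L. ?B ys * g (?B ys) (?A ys))"
    unfolding Inv_def by blast
  define i1 where "i1 = 2*j-1"
  define i2 where "i2 = 2*j"
  have em: "\<And>y1 y2. length y1 = 2^n \<Longrightarrow> Aof V (Suc n) i1 (y1@y2) = (?A y1 * ?B y2 + ?B y1 * ?A y2)/2"
     "\<And>y1 y2. length y1 = 2^n \<Longrightarrow> Bof V (Suc n) i1 (y1@y2) = (?B y1 * ?B y2 + ?A y1 * ?A y2)/2"
     "\<And>y1 y2. length y1 = 2^n \<Longrightarrow> Aof V (Suc n) i2 (y1@y2) = (?A y1 * ?A y2)/2"
     "\<And>y1 y2. length y1 = 2^n \<Longrightarrow> Bof V (Suc n) i2 (y1@y2) = (?B y1 * ?B y2)/2"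
     "\<And>y1 y2. muof V (y1@y2) = muof V y1 * muof V y2"
    unfolding i1_def i2_def using AB_minus AB_plus assms(2) muof_append by auto
  have "Inv V (Suc n) i1"
    unfolding Inv_def
  proof (intro conjI allI exI[of _ "K*K"])
    fix g :: "real \<Rightarrow> real \<Rightarrow> real"
    show "(\<Sum>ys\<in>{ys. length ys = 2^Suc n}. Aof V (Suc n) i1 ys * g (Aof V (Suc n) i1 ys) (Bof V (Suc n) i1 ys))
       = (\<Sum>ys\<in>{ys. length ys = 2^Suc n}. Bof V (Suc n) i1 ys * g (Bof V (Suc n) i1 ys) (Aof V (Suc n) i1 ys))"
      unfolding sum_LSuc using minus_sym[OF sym, of g] by (simp add: em)
    show "(\<Sum>ys\<in>{ys. length ys = 2^Suc n}. muof V ys * g (Aof V (Suc n) i1 ys) (Bof V (Suc n) i1 ys))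
       = K * K * (\<Sum>ys\<in>{ys. length ys = 2^Suc n}. Bof V (Suc n) i1 ys * g (Aof V (Suc n) i1 ys) (Bof V (Suc n) i1 ys))"
      unfolding sum_LSuc using minus_meas[OF sym meas, of g] by (simp add: em)
  qed (use K in simp)
  moreover have "Inv V (Suc n) i2"
    unfolding Inv_def
  proof (intro conjI allI exI[of _ "2*K*K"])
    fix g :: "real \<Rightarrow> real \<Rightarrow> real"
    show "(\<Sum>ys\<in>{ys. length ys = 2^Suc n}. Aof V (Suc n) i2 ys * g (Aof V (Suc n) i2 ys) (Bof V (Suc n) i2 ys))
       = (\<Sum>ys\<in>{ys. length ys = 2^Suc n}. Bof V (Suc n) i2 ys * g (Bof V (Suc n) i2 ys) (Aof V (Suc n) i2 ys))"
      unfolding sum_LSuc using plus_sym[OF sym, of g] by (simp add: em)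
    show "(\<Sum>ys\<in>{ys. length ys = 2^Suc n}. muof V ys * g (Aof V (Suc n) i2 ys) (Bof V (Suc n) i2 ys))
       = 2 * K * K * (\<Sum>ys\<in>{ys. length ys = 2^Suc n}. Bof V (Suc n) i2 ys * g (Aof V (Suc n) i2 ys) (Bof V (Suc n) i2 ys))"
      unfolding sum_LSuc using plus_meas[OF meas, of g] by (simp add: em)
  qed (use K in simp)
  ultimately show "Inv V (Suc n) (2*j-1)" "Inv V (Suc n) (2*j)" by (simp_all add: i1_def i2_def)
qed


lemma Inv_all:
  fixes V :: "('y::finite) channel"
  assumes "bij \<pi>" "\<forall>y. \<pi> (\<pi> y) = y" "\<forall>y. V y True = V (\<pi> y) False"
  shows "1 \<le> i \<Longrightarrow> Inv V n i"
proof (induction n arbitrary: i)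
  case 0 then show ?case using Inv_base[OF assms] by blast
next
  case (Suc n)
  show ?case
  proof (cases "odd i")
    case True
    define j where "j = (i+1) div 2"
    have j: "1 \<le> j" "i = 2*j-1" using True Suc.prems unfolding j_def by (auto elim!: oddE)
    show ?thesis using Inv_step(1)[OF Suc.IH[OF j(1)] j(1)] j(2) by simp
  next
    case False
    define j where "j = i div 2"
    have j: "1 \<le> j" "i = 2*j" using False Suc.prems unfolding j_def by (auto elim!: evenE)
    show ?thesis using Inv_step(2)[OF Suc.IH[OF j(1)] j(1)] j(2) by simp
  qed
qed

lemma condA_from_Inv:
  fixes V :: "('y::finite) channel"
  assumes "bdmc V" "Inv V n i"
  shows "condA V n i"
proof -
  let ?L = "{ys::'y list. length ys = 2^n}"
  let ?A = "Aof V n i" and ?B = "Bof V n i"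
  from assms(2) obtain K where K: "K \<ge> 0"
    and meas: "\<And>g. (\<Sum>ys\<in>?L. muof V ys * g (?A ys) (?B ys)) = K * (\<Sum>ys\<in>?L. ?B ys * g (?A ys) (?B ys))"
    and sym: "\<And>g. (\<Sum>ys\<in>?L. ?A ys * g (?A ys) (?B ys)) = (\<Sum>ys\<in>?L. ?B ys * g (?B ys) (?A ys))"
    unfolding Inv_def by blast
  have nA: "0 \<le> ?A ys" and nB: "0 \<le> ?B ys" for ys
    unfolding Aof_def Bof_def by (rule synth_nonneg[OF assms(1)])+
  define g1 :: "real \<Rightarrow> real \<Rightarrow> real" where "g1 = (\<lambda>a b. if a / b < 1 then 1 else 0)"
  define g2 :: "real \<Rightarrow> real \<Rightarrow> real" where "g2 = (\<lambda>a b. if a / b > 1 then 1 else 0)"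
  have LR: "LR V n i ys = ?A ys / ?B ys" for ys by (simp add: LR_def Aof_def Bof_def)
  have p1: "prob_zero V n (\<lambda>ys. LR V n i ys < 1) = (\<Sum>ys\<in>?L. muof V ys * g1 (?A ys) (?B ys))"
    unfolding prob_zero_def muof_def g1_def LR by simp
  have p2: "prob_zero V n (\<lambda>ys. LR V n i ys > 1) = (\<Sum>ys\<in>?L. muof V ys * g2 (?A ys) (?B ys))"
    unfolding prob_zero_def muof_def g2_def LR by simp
  have "(\<Sum>ys\<in>?L. ?B ys * g2 (?A ys) (?B ys)) \<le> (\<Sum>ys\<in>?L. ?A ys * g2 (?A ys) (?B ys))"
  proof (rule sum_mono)
    fix ys
    show "?B ys * g2 (?A ys) (?B ys) \<le> ?A ys * g2 (?A ys) (?B ys)"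
    proof (cases "?A ys / ?B ys > 1")
      case True
      then have "?B ys \<noteq> 0" by auto
      with nB[of ys] have "?B ys > 0" by simp
      with True have "?B ys < ?A ys" by (simp add: field_simps)
      then show ?thesis using True by (simp add: g2_def)
    qed (simp add: g2_def)
  qed
  also have "\<dots> = (\<Sum>ys\<in>?L. ?B ys * g2 (?B ys) (?A ys))" by (rule sym)
  also have "\<dots> \<le> (\<Sum>ys\<in>?L. ?B ys * g1 (?A ys) (?B ys))"
  proof (rule sum_mono)
    fix ys
    show "?B ys * g2 (?B ys) (?A ys) \<le> ?B ys * g1 (?A ys) (?B ys)"
    proof (cases "?B ys / ?A ys > 1")
      case True
      then have "?A ys \<noteq> 0" by auto
      with nA[of ys] have "?A ys > 0" by simp
      with True have "?A ys < ?B ys" by (simp add: field_simps)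
      then have "?A ys / ?B ys < 1" using \<open>?A ys > 0\<close> by (simp add: field_simps)
      then show ?thesis using True by (simp add: g1_def g2_def)
    qed (use nB in \<open>simp add: g1_def g2_def\<close>)
  qed
  finally have "(\<Sum>ys\<in>?L. ?B ys * g2 (?A ys) (?B ys)) \<le> (\<Sum>ys\<in>?L. ?B ys * g1 (?A ys) (?B ys))" .
  then have "K * (\<Sum>ys\<in>?L. ?B ys * g2 (?A ys) (?B ys)) \<le> K * (\<Sum>ys\<in>?L. ?B ys * g1 (?A ys) (?B ys))"
    using K by (rule mult_left_mono)
  then show ?thesis unfolding condA_def p1 p2 meas .
qed


section \<open>Error probability under the minus transform\<close>

definition hh :: "real \<Rightarrow> real" where
  "hh t = (if t > 0 then 1 else 0) + 1/2 * (if t = 0 then 1 else 0)"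

lemma hh_prod: "hh (- (t1 * t2) / 2) = hh t1 * (1 - hh t2) + hh t2 * (1 - hh t1)"
proof -
  consider "t1 < 0" | "t1 = 0" | "t1 > 0" by linarith
  then show ?thesis
  proof cases
    case 1
    consider "t2 < 0" | "t2 = 0" | "t2 > 0" by linarith
    then show ?thesis
      by cases (use 1 in \<open>auto simp: hh_def zero_less_mult_iff mult_less_0_iff\<close>)
  next
    case 2 then show ?thesis by (simp add: hh_def)
  next
    case 3
    consider "t2 < 0" | "t2 = 0" | "t2 > 0" by linarith
    then show ?thesis
      by cases (use 3 in \<open>auto simp: hh_def zero_less_mult_iff mult_less_0_iff\<close>)
  qed
qed

definition errf :: "(bool \<Rightarrow> real) \<Rightarrow> bool \<Rightarrow> real" where
  "errf Q u = (if Q (\<not> u) > Q u then 1 else 0) + 1/2 * (if Q (\<not> u) = Q u then 1 else 0)"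

lemma errf_hh: "errf Q u = hh ((if u then 1 else -1) * (Q False - Q True))"
  by (cases u) (auto simp: errf_def hh_def)

lemma errf_minus:
  "errf (\<lambda>b. \<Sum>u2\<in>UNIV. 1/2 * Q1 (b \<noteq> u2) * Q2 u2) (x1 \<noteq> x2)
     = errf Q1 x1 * (1 - errf Q2 x2) + errf Q2 x2 * (1 - errf Q1 x1)"
proof -
  let ?t1 = "(if x1 then 1 else -1) * (Q1 False - Q1 True)"
  let ?t2 = "(if x2 then 1 else -1) * (Q2 False - Q2 True)"
  have "(if x1 \<noteq> x2 then 1 else -1) * ((\<lambda>b. \<Sum>u2\<in>UNIV. 1/2 * Q1 (b \<noteq> u2) * Q2 u2) False - (\<lambda>b. \<Sum>u2\<in>UNIV. 1/2 * Q1 (b \<noteq> u2) * Q2 u2) True)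
      = - (?t1 * ?t2) / 2"
    by (cases x1; cases x2) (simp_all add: UNIV_bool algebra_simps)
  then show ?thesis by (simp only: errf_hh hh_prod)
qed

lemma errf_nonneg: "0 \<le> errf Q u" by (simp add: errf_def)
lemma errf_le1: "errf Q u \<le> 1" by (simp add: errf_def)

lemma errf_half: "0 \<le> Q False \<Longrightarrow> 0 \<le> Q True \<Longrightarrow> Q False * errf Q False + Q True * errf Q True \<le> (Q False + Q True) / 2"
  by (auto simp: errf_def)


definition cmb :: "'y list \<times> bool list \<Rightarrow> 'y list \<times> bool list \<Rightarrow> 'y list \<times> bool list" where
  "cmb o1 o2 = (fst o1 @ fst o2, il (xor_list (snd o1) (snd o2)) (snd o2))"

definition dec :: "nat \<Rightarrow> 'y list \<times> bool list \<Rightarrow> ('y list \<times> bool list) \<times> ('y list \<times> bool list)" where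
  "dec N o' = ((take N (fst o'), xor_list (odd_part (snd o')) (even_part (snd o'))), (drop N (fst o'), even_part (snd o')))"

lemma dec_cmb: "o1 \<in> syn_outputs n j \<Longrightarrow> o2 \<in> syn_outputs n j \<Longrightarrow> dec (2^n) (cmb o1 o2) = (o1, o2)"
  by (cases o1; cases o2) (simp add: syn_outputs_def dec_def cmb_def odd_il even_il xor_xor)

lemma finS: "finite (syn_outputs n i :: (('y::finite) list \<times> bool list) set)"
proof -
  have "syn_outputs n i = {ys::'y list. length ys = 2^n} \<times> {us::bool list. length us = i - 1}"
    by (auto simp: syn_outputs_def)
  then show ?thesis by (simp add: finL)
qed

lemma sum_S_minus:
  fixes F :: "('y list \<times> bool list) \<Rightarrow> 'b::comm_monoid_add"
  assumes "1 \<le> j" "i = 2*j-1"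
  shows "(\<Sum>o'\<in>syn_outputs (Suc n) i. F o') = (\<Sum>o1\<in>syn_outputs n j. \<Sum>o2\<in>syn_outputs n j. F (cmb o1 o2))"
proof -
  let ?S = "syn_outputs n j"
  have e: "syn_outputs (Suc n) i = (\<lambda>(a,b). cmb a b) ` (?S \<times> ?S)" unfolding assms(2)
  proof (rule set_eqI, rule iffI)
    fix x assume x: "x \<in> syn_outputs (Suc n) (2*j-1)"
    obtain ys us where xe: "x = (ys, us)" by (cases x)
    have l: "length ys = 2*2^n" "length us = 2*(j-1)" using x assms(1) unfolding xe syn_outputs_def by simp_all
    have h1: "dec (2^n) x \<in> ?S \<times> ?S" unfolding xe dec_def syn_outputs_def by (simp add: l)
    have h2: "(\<lambda>(a,b). cmb a b) (dec (2^n) x) = x"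
      using l unfolding xe dec_def cmb_def by (simp add: xor_xor il_parts)
    show "x \<in> (\<lambda>(a,b). cmb a b) ` (?S \<times> ?S)" using image_eqI[where f="\<lambda>(a,b). cmb a b", OF h2[symmetric] h1] .
  next
    fix x assume "x \<in> (\<lambda>(a,b). cmb a b) ` (?S \<times> ?S)"
    then obtain o1 o2 where oo: "o1 \<in> ?S" "o2 \<in> ?S" "x = cmb o1 o2" by auto
    obtain a b where o1: "o1 = (a,b)" "length a = 2^n" "length b = j-1" using oo(1) by (cases o1) (simp add: syn_outputs_def)
    obtain c d where o2: "o2 = (c,d)" "length c = 2^n" "length d = j-1" using oo(2) by (cases o2) (simp add: syn_outputs_def)
    have o: "o1 = (a,b)" "o2 = (c,d)" "length a = 2^n" "length c = 2^n" "length b = j-1" "length d = j-1"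
      "x = cmb o1 o2" using o1 o2 oo by auto
    have "length (a@c) = 2^Suc n" using o by simp
    moreover have "length (il (xor_list b d) d) = 2*j-1-1" using o assms(1) by (simp add: length_il)
    ultimately show "x \<in> syn_outputs (Suc n) (2*j-1)" unfolding o(7) o(1,2) cmb_def syn_outputs_def by simp
  qed
  have i: "inj_on (\<lambda>(a,b). cmb a b) (?S \<times> ?S)"
    by (rule inj_on_inverseI[where g="dec (2^n)"]) (clarsimp simp: dec_cmb)
  have "sum F ((\<lambda>(a,b). cmb a b) ` (?S \<times> ?S)) = (\<Sum>x\<in>?S \<times> ?S. F (case x of (a,b) \<Rightarrow> cmb a b))"
    by (rule sum.reindex[OF i, unfolded comp_def])
  moreover have "(\<Sum>x\<in>?S \<times> ?S. F (case x of (a,b) \<Rightarrow> cmb a b)) = (\<Sum>x\<in>?S \<times> ?S. case x of (a,b) \<Rightarrow> F (cmb a b))"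
    by (rule sum.cong) (auto split: prod.splits)
  ultimately show ?thesis unfolding e by (simp only: sum.cartesian_product)
qed

lemma sum_S_plus:
  fixes F :: "('y list \<times> bool list) \<Rightarrow> 'b::comm_monoid_add"
  assumes "1 \<le> j" "i = 2*j"
  shows "(\<Sum>o'\<in>syn_outputs (Suc n) i. F o') = (\<Sum>b\<in>UNIV. \<Sum>o'\<in>syn_outputs (Suc n) (2*j-1). F (fst o', snd o' @ [b]))"
proof -
  let ?S = "syn_outputs (Suc n) (2*j-1)"
  let ?f = "\<lambda>(o'::'y list \<times> bool list, b::bool). (fst o', snd o' @ [b])"
  have e: "syn_outputs (Suc n) i = ?f ` (?S \<times> UNIV)" unfolding assms(2)
  proof (rule set_eqI, rule iffI)
    fix x :: "'y list \<times> bool list" assume x: "x \<in> syn_outputs (Suc n) (2*j)"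
    obtain ys us where xe: "x = (ys, us)" by (cases x)
    have l: "length ys = 2^Suc n" "length us = Suc (2*j-1-1)" using x assms unfolding xe syn_outputs_def by auto
    then have "us \<noteq> []" by auto
    then have "us = butlast us @ [last us]" by simp
    moreover have "((ys, butlast us), last us) \<in> ?S \<times> UNIV" using l by (simp add: syn_outputs_def)
    ultimately show "x \<in> ?f ` (?S \<times> UNIV)" unfolding xe
      using image_eqI[where f="?f" and x="((ys, butlast us), last us)"] by simp
  next
    fix x :: "'y list \<times> bool list" assume "x \<in> ?f ` (?S \<times> UNIV)"
    then show "x \<in> syn_outputs (Suc n) (2*j)" using assms by (auto simp: syn_outputs_def)
  qed
  have i: "inj_on ?f (?S \<times> UNIV)" by (auto simp: inj_on_def)
  have "sum F (?f ` (?S \<times> UNIV)) = (\<Sum>x\<in>?S \<times> UNIV. F (?f x))"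
    by (rule sum.reindex[OF i, unfolded comp_def])
  also have "\<dots> = (\<Sum>o'\<in>?S. \<Sum>b\<in>UNIV. F (fst o', snd o' @ [b]))"
    by (simp only: sum.cartesian_product) (rule sum.cong, auto split: prod.splits)
  also have "\<dots> = (\<Sum>b\<in>UNIV. \<Sum>o'\<in>?S. F (fst o', snd o' @ [b]))"
    by (rule sum.swap)
  finally show ?thesis unfolding e .
qed

lemma synth_minus_cmb:
  assumes "odd i" "j = (i+1) div 2" "o1 \<in> syn_outputs n j" "o2 \<in> syn_outputs n j"
  shows "synth W (Suc n) i (cmb o1 o2) u = (\<Sum>u2\<in>UNIV. 1/2 * synth W n j o1 (u \<noteq> u2) * synth W n j o2 u2)"
  using assms by (cases o1; cases o2) (simp add: chan_minus_def syn_outputs_def cmb_def odd_il even_il xor_xor)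

lemma synth_plus_cmb:
  assumes "\<not> odd i" "j = i div 2" "o1 \<in> syn_outputs n j" "o2 \<in> syn_outputs n j"
  shows "synth W (Suc n) i (fst (cmb o1 o2), snd (cmb o1 o2) @ [b]) u = 1/2 * synth W n j o1 (b \<noteq> u) * synth W n j o2 u"
  using assms by (cases o1; cases o2) (simp add: chan_plus_def syn_outputs_def cmb_def odd_il even_il xor_xor Let_def)

lemma dsum_prod: "(\<Sum>o1\<in>S. \<Sum>o2\<in>T. c * f o1 * g o2) = c * (\<Sum>o1\<in>S. f o1) * (\<Sum>o2\<in>T. g o2)"
  for c :: real
proof -
  have "(\<Sum>o2\<in>T. c * f o1 * g o2) = c * f o1 * (\<Sum>o2\<in>T. g o2)" for o1 by (simp add: sum_distrib_left)
  then have "(\<Sum>o1\<in>S. \<Sum>o2\<in>T. c * f o1 * g o2) = (\<Sum>o1\<in>S. c * f o1 * (\<Sum>o2\<in>T. g o2))" by simp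
  also have "\<dots> = (\<Sum>o1\<in>S. c * f o1) * (\<Sum>o2\<in>T. g o2)" by (rule sum_distrib_right[symmetric])
  also have "\<dots> = c * (\<Sum>o1\<in>S. f o1) * (\<Sum>o2\<in>T. g o2)" by (simp add: sum_distrib_left)
  finally show ?thesis .
qed

lemma synth_total:
  fixes W :: "('y::finite) channel"
  assumes "bdmc W"
  shows "1 \<le> i \<Longrightarrow> i \<le> 2^n \<Longrightarrow> (\<Sum>o'\<in>syn_outputs n i. synth W n i o' x) = 1"
proof (induction n arbitrary: i x)
  case 0
  then have i1: "i = 1" by simp
  have e: "syn_outputs 0 i = (\<lambda>ys. (ys, [])) ` {ys::'y list. length ys = 2^0}"
    using i1 by (auto simp: syn_outputs_def)
  have inj: "inj_on (\<lambda>ys::'y list. (ys, [] :: bool list)) {ys. length ys = 2^0}" by (auto simp: inj_on_def)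
  show ?case unfolding e sum.reindex[OF inj] comp_def sum_L0
    using assms by (simp add: bdmc_def)
next
  case (Suc n)
  show ?case
  proof (cases "odd i")
    case True
    define j where "j = (i+1) div 2"
    have j: "1 \<le> j" "i = 2*j-1" "j \<le> 2^n" using True Suc.prems unfolding j_def by (auto elim!: oddE)
    have "(\<Sum>o'\<in>syn_outputs (Suc n) i. synth W (Suc n) i o' x)
        = (\<Sum>o1\<in>syn_outputs n j. \<Sum>o2\<in>syn_outputs n j. \<Sum>u2\<in>UNIV. 1/2 * synth W n j o1 (x \<noteq> u2) * synth W n j o2 u2)"
      unfolding sum_S_minus[OF j(1) j(2)]
      by (intro sum.cong refl, rule synth_minus_cmb[OF True j_def]; assumption)
    also have "\<dots> = (\<Sum>o1\<in>syn_outputs n j. \<Sum>o2\<in>syn_outputs n j. 1/2 * synth W n j o1 (\<not> x) * synth W n j o2 True)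
                   + (\<Sum>o1\<in>syn_outputs n j. \<Sum>o2\<in>syn_outputs n j. 1/2 * synth W n j o1 x * synth W n j o2 False)"
      by (simp add: UNIV_bool sum.distrib)
    also have "\<dots> = 1"
      by (simp only: dsum_prod Suc.IH[OF j(1) j(3)])
    finally show ?thesis .
  next
    case False
    define j where "j = i div 2"
    have j: "1 \<le> j" "i = 2*j" "j \<le> 2^n" using False Suc.prems unfolding j_def by (auto elim!: evenE)
    have "(\<Sum>o'\<in>syn_outputs (Suc n) i. synth W (Suc n) i o' x)
        = (\<Sum>b\<in>UNIV. \<Sum>o1\<in>syn_outputs n j. \<Sum>o2\<in>syn_outputs n j. 1/2 * synth W n j o1 (b \<noteq> x) * synth W n j o2 x)"
      unfolding sum_S_plus[OF j(1) j(2)] sum_S_minus[OF j(1) refl]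
      by (intro sum.cong refl, rule synth_plus_cmb[OF False j_def]; assumption)
    also have "\<dots> = 1"
      by (simp only: dsum_prod Suc.IH[OF j(1) j(3)]) (simp add: UNIV_bool)
    finally show ?thesis .
  qed
qed


lemma Pe_mis_errf:
  "Pe_mis W V n i = (\<Sum>u\<in>UNIV. 1/2 * (\<Sum>o'\<in>syn_outputs n i. synth W n i o' u * errf (synth V n i o') u))"
  unfolding Pe_mis_def errf_def by simp

lemma errf_minus':
  "errf (\<lambda>b. \<Sum>u2\<in>UNIV. 1/2 * Q1 (b \<noteq> u2) * Q2 u2) u
     = errf Q1 (u \<noteq> u2) * (1 - errf Q2 u2) + errf Q2 u2 * (1 - errf Q1 (u \<noteq> u2))"
proof -
  have h: "((u \<noteq> u2) \<noteq> u2) = u" by auto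
  show ?thesis using errf_minus[of Q1 Q2 "u \<noteq> u2" u2] unfolding h .
qed

lemma Pe_minus:
  fixes W V :: "('y::finite) channel"
  assumes W: "bdmc W" and j: "1 \<le> j" "j \<le> 2^n"
  shows "Pe_mis W V (Suc n) (2*j-1) = 2 * Pe_mis W V n j * (1 - Pe_mis W V n j)"
proof -
  define i where "i = 2*j-1"
  have oi: "odd i" "j = (i+1) div 2" using j unfolding i_def by auto
  let ?S = "syn_outputs n j"
  define Q where "Q = synth W n j"
  define R where "R = synth V n j"
  define e where "e = (\<lambda>o' x. errf (R o') x)"
  define p where "p = (\<lambda>x. \<Sum>o'\<in>?S. Q o' x * e o' x)"
  define Fx where "Fx = (\<lambda>x1 x2. \<Sum>o1\<in>?S. \<Sum>o2\<in>?S. Q o1 x1 * Q o2 x2 * (e o1 x1 * (1 - e o2 x2) + e o2 x2 * (1 - e o1 x1)))"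
  have tot: "(\<Sum>o'\<in>?S. Q o' x) = 1" for x unfolding Q_def by (rule synth_total[OF W j])
  have q: "(\<Sum>o'\<in>?S. Q o' x * (1 - e o' x)) = 1 - p x" for x
    by (simp add: p_def algebra_simps sum_subtractf tot)
  have Fx: "Fx x1 x2 = p x1 * (1 - p x2) + p x2 * (1 - p x1)" for x1 x2
  proof -
    have "p x1 * (1 - p x2) + p x2 * (1 - p x1)
       = (\<Sum>o1\<in>?S. Q o1 x1 * e o1 x1) * (\<Sum>o2\<in>?S. Q o2 x2 * (1 - e o2 x2))
         + (\<Sum>o1\<in>?S. Q o1 x1 * (1 - e o1 x1)) * (\<Sum>o2\<in>?S. Q o2 x2 * e o2 x2)"
      by (simp add: q p_def)
    also have "\<dots> = Fx x1 x2"
      unfolding Fx_def sum_product sum.distrib[symmetric] by (rule sum.cong[OF refl], rule sum.cong[OF refl]) (simp add: algebra_simps)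
    finally show ?thesis by simp
  qed
  have step: "(\<Sum>o'\<in>syn_outputs (Suc n) i. synth W (Suc n) i o' u * errf (synth V (Suc n) i o') u)
      = (\<Sum>u2\<in>UNIV. 1/2 * Fx (u \<noteq> u2) u2)" for u
  proof -
    have "(\<Sum>o'\<in>syn_outputs (Suc n) i. synth W (Suc n) i o' u * errf (synth V (Suc n) i o') u)
       = (\<Sum>o1\<in>?S. \<Sum>o2\<in>?S. synth W (Suc n) i (cmb o1 o2) u * errf (synth V (Suc n) i (cmb o1 o2)) u)"
      by (rule sum_S_minus[OF j(1) i_def])
    also have "\<dots> = (\<Sum>o1\<in>?S. \<Sum>o2\<in>?S. \<Sum>u2\<in>UNIV. 1/2 * (Q o1 (u \<noteq> u2) * Q o2 u2 *
           (e o1 (u \<noteq> u2) * (1 - e o2 u2) + e o2 u2 * (1 - e o1 (u \<noteq> u2)))))"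
    proof (intro sum.cong refl)
      fix o1 o2 :: "'y list \<times> bool list" assume o: "o1 \<in> ?S" "o2 \<in> ?S"
      have V': "synth V (Suc n) i (cmb o1 o2) = (\<lambda>b. \<Sum>u2\<in>UNIV. 1/2 * R o1 (b \<noteq> u2) * R o2 u2)"
        unfolding R_def by (rule ext) (rule synth_minus_cmb[OF oi o])
      show "synth W (Suc n) i (cmb o1 o2) u * errf (synth V (Suc n) i (cmb o1 o2)) u
          = (\<Sum>u2\<in>UNIV. 1/2 * (Q o1 (u \<noteq> u2) * Q o2 u2 *
           (e o1 (u \<noteq> u2) * (1 - e o2 u2) + e o2 u2 * (1 - e o1 (u \<noteq> u2)))))"
        unfolding V' synth_minus_cmb[OF oi o] sum_distrib_right
      proof (rule sum.cong[OF refl])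
        fix u2 :: bool
        show "1 / 2 * synth W n j o1 (u \<noteq> u2) * synth W n j o2 u2 * errf (\<lambda>b. \<Sum>u3\<in>UNIV. 1/2 * R o1 (b \<noteq> u3) * R o2 u3) u
          = 1/2 * (Q o1 (u \<noteq> u2) * Q o2 u2 * (e o1 (u \<noteq> u2) * (1 - e o2 u2) + e o2 u2 * (1 - e o1 (u \<noteq> u2))))"
          unfolding errf_minus'[of "R o1" "R o2" u u2] by (simp add: Q_def e_def)
      qed
    qed
    also have "\<dots> = (\<Sum>u2\<in>UNIV. 1/2 * Fx (u \<noteq> u2) u2)"
      unfolding Fx_def sum_distrib_left
      by (subst sum.swap, subst (2) sum.swap) (simp add: sum.swap[of _ UNIV])
    finally show ?thesis .
  qed
  have "Pe_mis W V (Suc n) (2*j-1) = (\<Sum>u\<in>UNIV. 1/2 * (\<Sum>u2\<in>UNIV. 1/2 * Fx (u \<noteq> u2) u2))"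
    unfolding Pe_mis_errf i_def[symmetric] step ..
  also have "\<dots> = 2 * (1/2 * (p False + p True)) * (1 - 1/2 * (p False + p True))"
    by (simp add: UNIV_bool Fx field_simps)
  also have "1/2 * (p False + p True) = Pe_mis W V n j"
    unfolding Pe_mis_errf by (simp add: UNIV_bool p_def Q_def e_def R_def)
  finally show ?thesis .
qed


lemma Pe_nonneg: "bdmc W \<Longrightarrow> 0 \<le> Pe_mis W V n i"
  unfolding Pe_mis_errf
  by (intro sum_nonneg mult_nonneg_nonneg) (simp_all add: synth_nonneg errf_nonneg)

lemma Pe_le_half:
  fixes V :: "('y::finite) channel"
  assumes V: "bdmc V" and i: "1 \<le> i" "i \<le> 2^n"
  shows "Pe V n i \<le> 1/2"
proof -
  let ?S = "syn_outputs n i"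
  let ?R = "synth V n i"
  have "Pe V n i = 1/2 * (\<Sum>o'\<in>?S. ?R o' False * errf (?R o') False + ?R o' True * errf (?R o') True)"
    unfolding Pe_def Pe_mis_errf by (simp add: UNIV_bool sum.distrib algebra_simps sum_distrib_left)
  also have "\<dots> \<le> 1/2 * (\<Sum>o'\<in>?S. (?R o' False + ?R o' True) / 2)"
    by (intro mult_left_mono sum_mono errf_half) (simp_all add: synth_nonneg[OF V])
  also have "\<dots> = 1/2"
    by (simp add: sum_divide_distrib[symmetric] sum.distrib synth_total[OF V i])
  finally show ?thesis .
qed

lemma general_part:
  fixes W V :: "('y::finite) channel"
  assumes W: "bdmc W" and V: "bdmc V" and s: "sym_same_perm W V"
    and i: "1 \<le> i" "i \<le> 2^n" and B: "condB W V n i"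
  shows "condA V (Suc n) (2*i - 1) \<and> condB W V (Suc n) (2*i - 1) \<and> condA V (Suc n) (2*i)"
proof -
  from s obtain \<pi> where p: "bij \<pi>" "\<forall>y. \<pi> (\<pi> y) = y" "\<forall>y. V y True = V (\<pi> y) False"
    unfolding sym_same_perm_def by blast
  have A1: "condA V (Suc n) (2*i - 1)" using i by (intro condA_from_Inv[OF V] Inv_all[OF p]) simp
  have A2: "condA V (Suc n) (2*i)" using i by (intro condA_from_Inv[OF V] Inv_all[OF p]) simp
  define a where "a = Pe_mis W V n i"
  define b where "b = Pe V n i"
  have ab: "0 \<le> a" "a \<le> b" "b \<le> 1/2"
    using Pe_nonneg[OF W] B Pe_le_half[OF V i] unfolding a_def b_def condB_def by auto
  have e1: "Pe_mis W V (Suc n) (2*i-1) = 2 * a * (1 - a)" unfolding a_def by (rule Pe_minus[OF W i])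
  have e2: "Pe V (Suc n) (2*i-1) = 2 * b * (1 - b)" unfolding b_def Pe_def by (rule Pe_minus[OF V i])
  have "0 \<le> (b - a) * (1 - a - b)" using ab by (intro mult_nonneg_nonneg) auto
  then have "2 * a * (1 - a) - 2 * b * (1 - b) \<le> 0" by (simp add: algebra_simps)
  then have "condB W V (Suc n) (2*i - 1)" unfolding condB_def e1 e2 .
  with A1 A2 show ?thesis by blast
qed


section \<open>Example\<close>

lemma sum_S01: "(\<Sum>o'\<in>syn_outputs 0 1. G o') = (\<Sum>y\<in>(UNIV::'y::finite set). G ([y],[]))"
proof -
  have e: "syn_outputs 0 1 = (\<lambda>y. ([y],[])) ` (UNIV::'y set)"
    by (auto simp: syn_outputs_def length_Suc_conv)
  have inj: "inj (\<lambda>y::'y. ([y], [] :: bool list))" by (auto simp: inj_def)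
  show ?thesis unfolding e by (simp add: sum.reindex[OF inj])
qed

lemma S01_mem: "([y],[]) \<in> syn_outputs 0 1" by (simp add: syn_outputs_def)

lemma Pe01:
  fixes W V :: "('y::finite) channel"
  shows "Pe_mis W V 0 1 = (\<Sum>u\<in>UNIV. 1/2 * (\<Sum>y\<in>UNIV. W y u * errf (V y) u))"
  unfolding Pe_mis_errf sum_S01 by simp

lemma Pe12:
  fixes W V :: "('y::finite) channel"
  shows "Pe_mis W V (Suc 0) 2 = (\<Sum>u\<in>UNIV. 1/2 * (\<Sum>b\<in>UNIV. \<Sum>y1\<in>UNIV. \<Sum>y2\<in>UNIV.
      1/2 * W y1 (b \<noteq> u) * W y2 u * errf (\<lambda>x. 1/2 * V y1 (b \<noteq> x) * V y2 x) u))"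
proof -
  have sp: "(\<Sum>o'\<in>syn_outputs (Suc 0) 2. G o') = (\<Sum>b\<in>UNIV. \<Sum>o'\<in>syn_outputs (Suc 0) (2*1-1). G (fst o', snd o' @ [b]))"
    for G :: "'y list \<times> bool list \<Rightarrow> real"
    by (rule sum_S_plus) simp_all
  have sm: "(\<Sum>o'\<in>syn_outputs (Suc 0) (2*1-1). H o') = (\<Sum>o1\<in>syn_outputs 0 1. \<Sum>o2\<in>syn_outputs 0 1. H (cmb o1 o2))"
    for H :: "'y list \<times> bool list \<Rightarrow> real"
    by (rule sum_S_minus) simp_all
  have val: "synth X (Suc 0) 2 (fst (cmb ([y1],[]) ([y2],[])), snd (cmb ([y1],[]) ([y2],[])) @ [b]) x = 1/2 * X y1 (b \<noteq> x) * X y2 x"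
    for X :: "'y channel" and y1 y2 b x
    using synth_plus_cmb[of 2 1 "([y1],[])" 0 "([y2],[])" X b x, OF _ _ S01_mem S01_mem] by simp
  have val': "synth X (Suc 0) 2 (fst (cmb ([y1],[]) ([y2],[])), snd (cmb ([y1],[]) ([y2],[])) @ [b]) = (\<lambda>x. 1/2 * X y1 (b \<noteq> x) * X y2 x)"
    for X :: "'y channel" and y1 y2 b
    by (rule ext) (rule val)
  show ?thesis
    unfolding Pe_mis_errf sp sm sum_S01 val val' ..
qed


lemma bdmc_W_ex: "bdmc W_ex"
  unfolding bdmc_def
proof (intro conjI allI)
  fix y x show "0 \<le> W_ex y x" by (cases y; cases x) (simp_all add: W_ex_def swap01_def)
next
  fix x show "(\<Sum>y\<in>UNIV. W_ex y x) = 1" by (cases x) (simp_all add: UNIV_Y3 W_ex_def swap01_def)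
qed

lemma bdmc_V_ex: "bdmc V_ex"
  unfolding bdmc_def
proof (intro conjI allI)
  fix y x show "0 \<le> V_ex y x" by (cases y; cases x) (simp_all add: V_ex_def swap01_def)
next
  fix x show "(\<Sum>y\<in>UNIV. V_ex y x) = 1" by (cases x) (simp_all add: UNIV_Y3 V_ex_def swap01_def)
qed

lemma swap01_inv: "swap01 (swap01 y) = y" by (cases y) (simp_all add: swap01_def)

lemma sym_ex: "sym_same_perm W_ex V_ex"
  unfolding sym_same_perm_def
proof (intro exI[of _ swap01] conjI allI)
  show "bij swap01" by (metis bijI' swap01_inv)
  show "swap01 (swap01 y) = y" for y by (rule swap01_inv)
  show "W_ex y True = W_ex (swap01 y) False" for y by (cases y) (simp_all add: W_ex_def swap01_def)
  show "V_ex y True = V_ex (swap01 y) False" for y by (cases y) (simp_all add: V_ex_def swap01_def)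
qed

lemma condA_ex: "condA V_ex 0 1"
proof -
  from sym_ex obtain \<pi> where p: "bij \<pi>" "\<forall>y. \<pi> (\<pi> y) = y" "\<forall>y. V_ex y True = V_ex (\<pi> y) False"
    unfolding sym_same_perm_def by blast
  show ?thesis by (intro condA_from_Inv[OF bdmc_V_ex] Inv_all[OF p]) simp
qed

lemma condB_ex0: "condB W_ex V_ex 0 1"
  unfolding condB_def Pe_def Pe01
  by (simp add: UNIV_Y3 UNIV_bool W_ex_def V_ex_def swap01_def errf_def)

lemma condB_ex1: "\<not> condB W_ex V_ex 1 2"
  unfolding condB_def Pe_def One_nat_def Pe12
  by (simp add: UNIV_Y3 UNIV_bool W_ex_def V_ex_def swap01_def errf_def)


theorem theorem3:
  fixes W V :: "('y::finite) channel"
  shows "(bdmc W \<and> bdmc V \<and> sym_same_perm W V \<longrightarrow>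
           (\<forall>n i. 1 \<le> i \<and> i \<le> 2^n \<and> condA V n i \<and> condB W V n i \<longrightarrow>
              condA V (Suc n) (2*i - 1) \<and> condB W V (Suc n) (2*i - 1) \<and>
              condA V (Suc n) (2*i)))
       \<and> (bdmc W_ex \<and> bdmc V_ex \<and> sym_same_perm W_ex V_ex \<and>
          condA V_ex 0 1 \<and> condB W_ex V_ex 0 1 \<and> \<not> condB W_ex V_ex 1 2)"
proof (rule conjI)
  show "bdmc W \<and> bdmc V \<and> sym_same_perm W V \<longrightarrow>
           (\<forall>n i. 1 \<le> i \<and> i \<le> 2^n \<and> condA V n i \<and> condB W V n i \<longrightarrow>
              condA V (Suc n) (2*i - 1) \<and> condB W V (Suc n) (2*i - 1) \<and>
              condA V (Suc n) (2*i))"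
    using general_part[of W V] by blast
  show "bdmc W_ex \<and> bdmc V_ex \<and> sym_same_perm W_ex V_ex \<and>
          condA V_ex 0 1 \<and> condB W_ex V_ex 0 1 \<and> \<not> condB W_ex V_ex 1 2"
    using bdmc_W_ex bdmc_V_ex sym_ex condA_ex condB_ex0 condB_ex1 by blast
qed

end
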